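(* Let $T$ be a lifted graph, $F\colon T\to T$ a continuous sun-like map of degree 1, ${\cal P}$ a basic partition of $F$ and ${\cal G}$ its covering graph. Let $\alpha=A_0\dots A_n/\!\sim$ be a vertex of ${\cal G}$ (with $A_0,\dots,A_n\in{\cal P}$) and let $\alpha\to\beta$ be an arrow in ${\cal G}$. Then there exists $A_{n+1}\in{\cal P}$ such that $\beta=A_0\dots A_nA_{n+1}/\!\sim$.
   Context: A lifted graph is a connected topological space $T$ with a homeomorphism $h\colon\mathbb R\to h(\mathbb R)\subset T$ and a homeomorphism $\tau\colon T\to T$ such that $\tau(h(x))=h(x+1)$, the closure of each connected component of $T\setminus h(\mathbb R)$ is a topological finite graph meeting $h(\mathbb R)$ in exactly one point, and only finitely many such components have closure meeting $h([0,1])$. Identify $h(\mathbb R)$ with $\mathbb R$, write $x+m:=\tau^m(x)$; $r_{\mathbb R}\colon T\to\mathbb R$ is the identity on $\mathbb R$ and maps a component $C$ of $T\setminus\mathbb R$ to the point $\overline C\cap\mathbb R$. $F$ has degree 1 if $F(x+1)=F(x)+1$. Let $T_{\mathbb R}:=\overline{\bigcup_{n\ge0}F^n(\mathbb R)}$, $X:=\overline{T\setminus T_{\mathbb R}}\cap r_{\mathbb R}^{-1}([0,1))$. $F$ is sun-like if $(T\setminus T_{\mathbb R})\cap r_{\mathbb R}^{-1}([0,1))$ consists of finitely many intervals with pairwise disjoint closures $X^i$, $i\in\Lambda$ (branches), each a compact interval meeting $T_{\mathbb R}$ in one endpoint $\min X^i$ (fixing the order of $X^i$). A basic partition is a finite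 family ${\cal P}=\{X^i_j\}$ of pairwise disjoint nonempty compact intervals $X^i_1<\dots<X^i_{N_i}$ in $X^i$, with $\ell(X^i_j)\in\Lambda$, $p(X^i_j)\in\mathbb Z$, such that $F(X^i_j)\subset(X^{\ell(X^i_j)}+p(X^i_j))\cup\mathrm{Int}(T_{\mathbb R})$, $F(\min X^i_j)=\min X^{\ell(X^i_j)}+p(X^i_j)$, and $F(X\setminus\bigcup X^i_j)\cap(X+\mathbb Z)=\emptyset$. For $A_0,\dots,A_n\in{\cal P}$, $\langle A_0\dots A_n\rangle:=F^n(\{x\in T: F^i(x)\in A_i+\mathbb Z,\ 0\le i\le n\})\cap X$. $A_0\dots A_n\sim B_0\dots B_m$ iff for some $k\le\min(n,m)$, $A_{n-i}=B_{m-i}$ ($0\le i\le k$) and $\langle A_0\dots A_{n-k}\rangle=A_{n-k}=B_{m-k}=\langle B_0\dots B_{m-k}\rangle$ (an equivalence relation). The covering graph ${\cal G}$: vertices are classes $A_0\dots A_n/\!\sim$ with $\langle A_0\dots A_n\rangle\ne\emptyset$; an arrow $\alpha\to\beta$ exists iff $\alpha=B_0\dots B_m/\!\sim$ and $\beta=B_0\dots B_mB_{m+1}/\!\sim$ for some $B_0,\dots,B_{m+1}\in{\cal P}$. *)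

theory Defs
  imports "HOL-Analysis.Analysis"
begin

definition finite_top_graph :: "'a topology \<Rightarrow> bool" where
  "finite_top_graph Y \<longleftrightarrow> Hausdorff_space Y \<and>
     (\<exists>V E. finite V \<and> finite E \<and> V \<subseteq> topspace Y \<and> topspace Y = V \<union> \<Union>E \<and>
        (\<forall>e\<in>E. e \<subseteq> topspace Y \<and> (\<exists>g. homeomorphic_map (top_of_set {0..1::real}) (subtopology Y e) g
                 \<and> g 0 \<noteq> g 1 \<and> e \<inter> V = {g 0, g 1})) \<and>
        (\<forall>e\<in>E. \<forall>e'\<in>E. e \<noteq> e' \<longrightarrow> e \<inter> e' \<subseteq> V))"

text \<open>Lifted graph (X = topology on T, h = embedding of the real line, tau = translation).\<close>
definition lifted_graph :: "'a topology \<Rightarrow> (real \<Rightarrow> 'a) \<Rightarrow> ('a \<Rightarrow> 'a) \<Rightarrow> bool" where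
  "lifted_graph X h tau \<longleftrightarrow> connected_space X \<and> embedding_map euclideanreal X h \<and>
     homeomorphic_map X X tau \<and> (\<forall>x. tau (h x) = h (x + 1)) \<and>
     (\<forall>C\<in>connected_components_of (subtopology X (topspace X - range h)).
        finite_top_graph (subtopology X (X closure_of C)) \<and>
        (\<exists>!y. y \<in> X closure_of C \<inter> range h)) \<and>
     finite {C\<in>connected_components_of (subtopology X (topspace X - range h)).
               X closure_of C \<inter> h ` {0..1} \<noteq> {}}"

text \<open>Integer powers of tau: x + m.\<close>
definition tpow :: "'a topology \<Rightarrow> ('a \<Rightarrow> 'a) \<Rightarrow> int \<Rightarrow> 'a \<Rightarrow> 'a" where
  "tpow X tau m x = (if 0 \<le> m then (tau ^^ nat m) x else (inv_into (topspace X) tau ^^ nat (- m)) x)"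

definition degree_one :: "'a topology \<Rightarrow> ('a \<Rightarrow> 'a) \<Rightarrow> ('a \<Rightarrow> 'a) \<Rightarrow> bool" where
  "degree_one X tau F \<longleftrightarrow> (\<forall>x\<in>topspace X. F (tau x) = tau (F x))"

definition rR :: "'a topology \<Rightarrow> (real \<Rightarrow> 'a) \<Rightarrow> 'a \<Rightarrow> real" where
  "rR X h y = (if y \<in> range h then inv h y
     else (THE t. h t \<in> X closure_of
              connected_component_of_set (subtopology X (topspace X - range h)) y))"

definition TR :: "'a topology \<Rightarrow> (real \<Rightarrow> 'a) \<Rightarrow> ('a \<Rightarrow> 'a) \<Rightarrow> 'a set" where
  "TR X h F = X closure_of (\<Union>n. (F ^^ n) ` range h)"

definition unitfib :: "'a topology \<Rightarrow> (real \<Rightarrow> 'a) \<Rightarrow> 'a set" where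
  "unitfib X h = {y \<in> topspace X. 0 \<le> rR X h y \<and> rR X h y < 1}"

definition Sset :: "'a topology \<Rightarrow> (real \<Rightarrow> 'a) \<Rightarrow> ('a \<Rightarrow> 'a) \<Rightarrow> 'a set" where
  "Sset X h F = (topspace X - TR X h F) \<inter> unitfib X h"

definition Xset :: "'a topology \<Rightarrow> (real \<Rightarrow> 'a) \<Rightarrow> ('a \<Rightarrow> 'a) \<Rightarrow> 'a set" where
  "Xset X h F = (X closure_of (topspace X - TR X h F)) \<inter> unitfib X h"

definition sun_like :: "'a topology \<Rightarrow> (real \<Rightarrow> 'a) \<Rightarrow> ('a \<Rightarrow> 'a) \<Rightarrow> bool" where
  "sun_like X h F \<longleftrightarrow>
     (let Cs = connected_components_of (subtopology X (Sset X h F)) in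
       finite Cs \<and>
       pairwise (\<lambda>C D. X closure_of C \<inter> X closure_of D = {}) Cs \<and>
       (\<forall>C\<in>Cs. \<exists>g. homeomorphic_map (top_of_set {0..1::real}) (subtopology X (X closure_of C)) g \<and>
                  X closure_of C \<inter> TR X h F = {g 0}))"

text \<open>The branches X^i (the index set Lambda is identified with the set of branches).\<close>
definition branches :: "'a topology \<Rightarrow> (real \<Rightarrow> 'a) \<Rightarrow> ('a \<Rightarrow> 'a) \<Rightarrow> 'a set set" where
  "branches X h F = (\<lambda>C. X closure_of C) ` connected_components_of (subtopology X (Sset X h F))"

definition bmin :: "'a topology \<Rightarrow> (real \<Rightarrow> 'a) \<Rightarrow> ('a \<Rightarrow> 'a) \<Rightarrow> 'a set \<Rightarrow> 'a" where
  "bmin X h F B = (THE m. m \<in> B \<inter> TR X h F)"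

definition ble :: "'a topology \<Rightarrow> (real \<Rightarrow> 'a) \<Rightarrow> ('a \<Rightarrow> 'a) \<Rightarrow> 'a set \<Rightarrow> 'a \<Rightarrow> 'a \<Rightarrow> bool" where
  "ble X h F B x y \<longleftrightarrow> (\<exists>g s t. homeomorphic_map (top_of_set {0..1::real}) (subtopology X B) g \<and>
      g 0 = bmin X h F B \<and> s \<in> {0..1} \<and> t \<in> {0..1} \<and> g s = x \<and> g t = y \<and> s \<le> t)"

definition cinterval :: "'a topology \<Rightarrow> (real \<Rightarrow> 'a) \<Rightarrow> ('a \<Rightarrow> 'a) \<Rightarrow> 'a set \<Rightarrow> 'a set \<Rightarrow> bool" where
  "cinterval X h F B J \<longleftrightarrow> J \<noteq> {} \<and>
     (\<exists>a\<in>B. \<exists>b\<in>B. J = {x\<in>B. ble X h F B a x \<and> ble X h F B x b})"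

definition imin :: "'a topology \<Rightarrow> (real \<Rightarrow> 'a) \<Rightarrow> ('a \<Rightarrow> 'a) \<Rightarrow> 'a set \<Rightarrow> 'a set \<Rightarrow> 'a" where
  "imin X h F B J = (THE m. m \<in> J \<and> (\<forall>y\<in>J. ble X h F B m y))"

definition shiftZ :: "'a topology \<Rightarrow> ('a \<Rightarrow> 'a) \<Rightarrow> 'a set \<Rightarrow> 'a set" where
  "shiftZ X tau A = (\<Union>m. tpow X tau m ` A)"

definition basic_partition ::
  "'a topology \<Rightarrow> (real \<Rightarrow> 'a) \<Rightarrow> ('a \<Rightarrow> 'a) \<Rightarrow> ('a \<Rightarrow> 'a) \<Rightarrow> 'a set set \<Rightarrow> bool" where
  "basic_partition X h tau F P \<longleftrightarrow> finite P \<and> pairwise disjnt P \<and>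
     (\<exists>(l :: 'a set \<Rightarrow> 'a set) (p :: 'a set \<Rightarrow> int). \<forall>A\<in>P.
        (\<exists>B\<in>branches X h F. A \<subseteq> B \<and> cinterval X h F B A \<and>
             F (imin X h F B A) = tpow X tau (p A) (bmin X h F (l A))) \<and>
        l A \<in> branches X h F \<and>
        F ` A \<subseteq> tpow X tau (p A) ` (l A) \<union> X interior_of (TR X h F)) \<and>
     F ` (Xset X h F - \<Union>P) \<inter> shiftZ X tau (Xset X h F) = {}"

text \<open>\<langle>A_0 ... A_n\<rangle> for a nonempty list As = [A_0,...,A_n].\<close>
definition angle ::
  "'a topology \<Rightarrow> (real \<Rightarrow> 'a) \<Rightarrow> ('a \<Rightarrow> 'a) \<Rightarrow> ('a \<Rightarrow> 'a) \<Rightarrow> 'a set list \<Rightarrow> 'a set" where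
  "angle X h tau F As = (F ^^ (length As - 1)) `
       {x\<in>topspace X. \<forall>i<length As. (F ^^ i) x \<in> shiftZ X tau (As ! i)} \<inter> Xset X h F"

definition seq_equiv ::
  "'a topology \<Rightarrow> (real \<Rightarrow> 'a) \<Rightarrow> ('a \<Rightarrow> 'a) \<Rightarrow> ('a \<Rightarrow> 'a) \<Rightarrow> 'a set list \<Rightarrow> 'a set list \<Rightarrow> bool" where
  "seq_equiv X h tau F As Bs \<longleftrightarrow> As \<noteq> [] \<and> Bs \<noteq> [] \<and>
     (let n = length As - 1; m = length Bs - 1 in
      \<exists>k\<le>min n m. (\<forall>i\<le>k. As ! (n - i) = Bs ! (m - i)) \<and>
        angle X h tau F (take (n - k + 1) As) = As ! (n - k) \<and>
        As ! (n - k) = Bs ! (m - k) \<and>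
        angle X h tau F (take (m - k + 1) Bs) = Bs ! (m - k))"

definition cls ::
  "'a topology \<Rightarrow> (real \<Rightarrow> 'a) \<Rightarrow> ('a \<Rightarrow> 'a) \<Rightarrow> ('a \<Rightarrow> 'a) \<Rightarrow> 'a set set \<Rightarrow> 'a set list \<Rightarrow> 'a set list set" where
  "cls X h tau F P As = {Bs. Bs \<in> lists P \<and> seq_equiv X h tau F As Bs}"

definition cg_vertices ::
  "'a topology \<Rightarrow> (real \<Rightarrow> 'a) \<Rightarrow> ('a \<Rightarrow> 'a) \<Rightarrow> ('a \<Rightarrow> 'a) \<Rightarrow> 'a set set \<Rightarrow> 'a set list set set" where
  "cg_vertices X h tau F P =
     {cls X h tau F P As | As. As \<in> lists P \<and> As \<noteq> [] \<and> angle X h tau F As \<noteq> {}}"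

definition cg_arrow ::
  "'a topology \<Rightarrow> (real \<Rightarrow> 'a) \<Rightarrow> ('a \<Rightarrow> 'a) \<Rightarrow> ('a \<Rightarrow> 'a) \<Rightarrow> 'a set set \<Rightarrow>
     'a set list set \<Rightarrow> 'a set list set \<Rightarrow> bool" where
  "cg_arrow X h tau F P \<alpha> \<beta> \<longleftrightarrow> \<alpha> \<in> cg_vertices X h tau F P \<and> \<beta> \<in> cg_vertices X h tau F P \<and>
     (\<exists>Bs\<in>lists P. Bs \<noteq> [] \<and> (\<exists>B\<in>P. \<alpha> = cls X h tau F P Bs \<and> \<beta> = cls X h tau F P (Bs @ [B])))"

end

theory Submission
  imports Defs
begin

lemma hom_facts:
  assumes "homeomorphic_map X X tau"
  shows "bij_betw tau (topspace X) (topspace X)"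
  by (simp add: bij_betw_def homeomorphic_imp_injective_map[OF assms] homeomorphic_imp_surjective_map[OF assms])

context
  fixes X :: "'a topology" and tau :: "'a \<Rightarrow> 'a"
  assumes hom: "homeomorphic_map X X tau"
begin

lemma bij_tau: "bij_betw tau (topspace X) (topspace X)" using hom_facts[OF hom] .

lemma tau_in: "x \<in> topspace X \<Longrightarrow> tau x \<in> topspace X"
  using bij_tau bij_betwE by blast

lemma itau_in: "x \<in> topspace X \<Longrightarrow> inv_into (topspace X) tau x \<in> topspace X"
  by (metis bij_betw_def bij_tau inv_into_into)

lemma tau_itau: "x \<in> topspace X \<Longrightarrow> tau (inv_into (topspace X) tau x) = x"
  by (metis bij_betw_def bij_tau f_inv_into_f)

lemma itau_tau: "x \<in> topspace X \<Longrightarrow> inv_into (topspace X) tau (tau x) = x"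
  by (meson bij_betw_def bij_tau inv_into_f_f)

lemma itau_pow_in: "x \<in> topspace X \<Longrightarrow> (inv_into (topspace X) tau ^^ k) x \<in> topspace X"
  by (induction k) (auto simp: itau_in)

lemma tau_pow_in: "x \<in> topspace X \<Longrightarrow> (tau ^^ k) x \<in> topspace X"
  by (induction k) (auto simp: tau_in)

lemma tpow_in: "x \<in> topspace X \<Longrightarrow> tpow X tau m x \<in> topspace X"
  by (simp add: tpow_def itau_pow_in tau_pow_in)

lemma tpow0[simp]: "tpow X tau 0 x = x"
  by (simp add: tpow_def)

lemma tpow_succ: assumes "x \<in> topspace X" shows "tpow X tau (m+1) x = tau (tpow X tau m x)"
proof (cases "m \<ge> 0")
  case True
  then have "nat (m+1) = Suc (nat m)" by simp
  then show ?thesis using True by (simp add: tpow_def)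
next
  case False
  show ?thesis
  proof (cases "m = -1")
    case True
    then show ?thesis by (simp add: tpow_def tau_itau assms)
  next
    case F2: False
    then have "nat (-m) = Suc (nat (-(m+1)))" using False by simp
    then show ?thesis using False F2 by (simp add: tpow_def tau_itau itau_pow_in assms)
  qed
qed

lemma tpow_pred: assumes "x \<in> topspace X" shows "tpow X tau (m-1) x = inv_into (topspace X) tau (tpow X tau m x)"
proof -
  have "tpow X tau m x = tau (tpow X tau (m-1) x)" using tpow_succ[OF assms, of "m-1"] by simp
  then show ?thesis using itau_tau tpow_in assms by metis
qed

lemma tpow_add: assumes "x \<in> topspace X" shows "tpow X tau m (tpow X tau m' x) = tpow X tau (m+m') x"
proof (induction m rule: int_induct[where k=0])
  case base then show ?case by simp
next
  case (step1 i)
  then show ?case using tpow_succ tpow_in assms by (metis add.commute add.left_commute)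
next
  case (step2 i)
  then show ?case using tpow_pred tpow_in assms by (metis add.commute diff_add_eq)
qed

end

lemma seq_equiv_ne: assumes "seq_equiv X h tau F As Bs" shows "As \<noteq> []" "Bs \<noteq> []"
  using assms unfolding seq_equiv_def
  by (rule conjunct1, rule conjunct1[OF conjunct2])

lemma seq_equiv_sym:
  assumes "seq_equiv X h tau F As Bs" shows "seq_equiv X h tau F Bs As"
proof -
  define n where "n = length As - 1"
  define m where "m = length Bs - 1"
  obtain k where k: "k \<le> min n m" "\<forall>i\<le>k. As!(n-i) = Bs!(m-i)"
     "angle X h tau F (take (n-k+1) As) = As!(n-k)" "As!(n-k) = Bs!(m-k)"
     "angle X h tau F (take (m-k+1) Bs) = Bs!(m-k)" "As \<noteq> []" "Bs \<noteq> []"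
    using assms unfolding seq_equiv_def Let_def n_def m_def by blast
  have "k \<le> min m n" using k by simp
  then show ?thesis unfolding seq_equiv_def Let_def n_def[symmetric] m_def[symmetric]
    using k by (intro conjI exI[of _ k]) auto
qed

lemma seq_equiv_snoc:
  assumes "seq_equiv X h tau F As Bs" shows "seq_equiv X h tau F (As@[B]) (Bs@[B])"
proof -
  define n where "n = length As - 1"
  define m where "m = length Bs - 1"
  obtain k where k: "k \<le> min n m" "\<forall>i\<le>k. As!(n-i) = Bs!(m-i)"
     "angle X h tau F (take (n-k+1) As) = As!(n-k)" "As!(n-k) = Bs!(m-k)"
     "angle X h tau F (take (m-k+1) Bs) = Bs!(m-k)" "As \<noteq> []" "Bs \<noteq> []"
    using assms unfolding seq_equiv_def Let_def n_def m_def by blast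
  have ln: "length (As@[B]) - 1 = n+1" "length (Bs@[B]) - 1 = m+1" using k(6,7) n_def m_def by auto
  have la: "length As = n+1" "length Bs = m+1" using k(6,7) n_def m_def by auto
  have tl: "\<forall>i\<le>k+1. (As@[B])!(n+1-i) = (Bs@[B])!(m+1-i)"
  proof (intro allI impI)
    fix i assume i: "i \<le> k+1"
    show "(As@[B])!(n+1-i) = (Bs@[B])!(m+1-i)"
    proof (cases "i = 0")
      case True
      then show ?thesis using la by (simp add: nth_append)
    next
      case False
      have km: "k \<le> n" "k \<le> m" using k(1) by auto
      have eqs: "n+1-i = n-(i-1)" "m+1-i = m-(i-1)" using False i km by auto
      have lt: "n-(i-1) < length As" "m-(i-1) < length Bs" using la by auto
      have "i-1 \<le> k" using i by simp
      then have "As!(n-(i-1)) = Bs!(m-(i-1))" using k(2) by blast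
      then show ?thesis unfolding eqs using lt by (simp add: nth_append)
    qed
  qed
  have lt2: "n-k < length As" "m-k < length Bs" using la by auto
  have e1: "n+1-(k+1)+1 = n-k+1" "m+1-(k+1)+1 = m-k+1" "n+1-(k+1) = n-k" "m+1-(k+1) = m-k" by auto
  have t1: "take (n+1-(k+1)+1) (As@[B]) = take (n-k+1) As" unfolding e1 using la k(1) by simp
  have t2: "take (m+1-(k+1)+1) (Bs@[B]) = take (m-k+1) Bs" unfolding e1 using la k(1) by simp
  have x1: "(As@[B])!(n+1-(k+1)) = As!(n-k)" unfolding e1 using lt2 by (simp add: nth_append)
  have x2: "(Bs@[B])!(m+1-(k+1)) = Bs!(m-k)" unfolding e1 using lt2 by (simp add: nth_append)
  have kb: "k+1 \<le> min (n+1) (m+1)" using k(1) by simp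
  have ex: "\<exists>kk\<le>min (n+1) (m+1). (\<forall>i\<le>kk. (As@[B])!(n+1-i) = (Bs@[B])!(m+1-i)) \<and>
        angle X h tau F (take (n+1-kk+1) (As@[B])) = (As@[B])!(n+1-kk) \<and>
        (As@[B])!(n+1-kk) = (Bs@[B])!(m+1-kk) \<and>
        angle X h tau F (take (m+1-kk+1) (Bs@[B])) = (Bs@[B])!(m+1-kk)"
    apply (rule exI[of _ "k+1"])
    apply (simp only: t1 t2 x1 x2)
    by (intro conjI kb tl k(3) k(4) k(5))
  have ne': "As@[B] \<noteq> []" "Bs@[B] \<noteq> []" by auto
  show ?thesis unfolding seq_equiv_def Let_def ln by (intro conjI ne' ex)
qed

lemma mem_shiftZ: "y \<in> shiftZ X tau A \<longleftrightarrow> (\<exists>m. \<exists>a\<in>A. y = tpow X tau m a)"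
  by (auto simp: shiftZ_def)

context
  fixes X :: "'a topology" and tau F :: "'a \<Rightarrow> 'a" and h :: "real \<Rightarrow> 'a"
  assumes hom: "homeomorphic_map X X tau" and cont: "continuous_map X X F"
    and deg: "degree_one X tau F"
begin

lemma F_in: "x \<in> topspace X \<Longrightarrow> F x \<in> topspace X"
  using continuous_map_image_subset_topspace[OF cont] by blast

lemma Fpow_in: "x \<in> topspace X \<Longrightarrow> (F ^^ k) x \<in> topspace X"
  by (induction k) (auto simp: F_in)

lemma F_tau: "x \<in> topspace X \<Longrightarrow> F (tau x) = tau (F x)"
  using deg unfolding degree_one_def by blast

lemma F_itau: assumes "x \<in> topspace X"
  shows "F (inv_into (topspace X) tau x) = inv_into (topspace X) tau (F x)"
proof -
  define w where "w = inv_into (topspace X) tau x"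
  have w: "w \<in> topspace X" "tau w = x" using assms itau_in[OF hom] tau_itau[OF hom] w_def by auto
  have "F x = tau (F w)" using F_tau[OF w(1)] w(2) by simp
  then have "inv_into (topspace X) tau (F x) = F w" using itau_tau[OF hom] F_in[OF w(1)] by simp
  then show ?thesis using w_def by simp
qed

lemma F_tpow: "x \<in> topspace X \<Longrightarrow> F (tpow X tau m x) = tpow X tau m (F x)"
proof (induction m rule: int_induct[where k=0])
  case base then show ?case by (simp add: tpow_def)
next
  case (step1 i)
  then show ?case by (simp add: tpow_succ[OF hom] tpow_in[OF hom] F_tau F_in)
next
  case (step2 i)
  then show ?case by (simp add: tpow_pred[OF hom] tpow_in[OF hom] F_itau F_in)
qed

lemma Fpow_tpow: "x \<in> topspace X \<Longrightarrow> (F ^^ k) (tpow X tau m x) = tpow X tau m ((F ^^ k) x)"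
  by (induction k) (auto simp: F_tpow Fpow_in)

lemma shiftZ_tpow: assumes "A \<subseteq> topspace X" "y \<in> shiftZ X tau A"
  shows "tpow X tau m y \<in> shiftZ X tau A"
proof -
  have "\<exists>m. \<exists>a\<in>A. y = tpow X tau m a" using assms(2) by (simp only: mem_shiftZ)
  then obtain m' a where "a \<in> A" "y = tpow X tau m' a" by (elim exE bexE)
  moreover have "a \<in> topspace X" using assms \<open>a \<in> A\<close> by auto
  ultimately have "tpow X tau m y = tpow X tau (m+m') a" using tpow_add[OF hom] by simp
  then show ?thesis unfolding mem_shiftZ using \<open>a \<in> A\<close> by blast
qed

lemma shiftZ_sub: "A \<subseteq> topspace X \<Longrightarrow> shiftZ X tau A \<subseteq> topspace X"
  unfolding shiftZ_def using tpow_in[OF hom] by auto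

lemma angle_comp:
  assumes sub: "\<forall>A\<in>set Xs. A \<subseteq> topspace X" and len: "j + r < length Xs"
    and full: "angle X h tau F (take (j+1) Xs) = Xs!j"
  shows "angle X h tau F (take (j+r+1) Xs) = angle X h tau F (drop j (take (j+r+1) Xs))"
proof -
  have subi: "\<And>i. i < length Xs \<Longrightarrow> Xs!i \<subseteq> topspace X" using sub by auto
  have 1: "(F^^j) ` {x\<in>topspace X. \<forall>i<j+r+1. (F^^i) x \<in> shiftZ X tau (Xs!i)}
        = {y\<in>topspace X. \<forall>i<r+1. (F^^i) y \<in> shiftZ X tau (Xs!(j+i))}" (is "?L = ?R")
  proof
    show "?L \<subseteq> ?R"
    proof
      fix y assume "y \<in> ?L"
      then obtain x where x: "x \<in> topspace X" "\<forall>i<j+r+1. (F^^i) x \<in> shiftZ X tau (Xs!i)" "y = (F^^j) x"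
        by auto
      have "\<forall>i<r+1. (F^^i) y \<in> shiftZ X tau (Xs!(j+i))"
      proof (intro allI impI)
        fix i assume "i < r+1"
        then have "(F^^(i+j)) x \<in> shiftZ X tau (Xs!(j+i))" using x(2) by (simp add: add.commute)
        moreover have "(F^^i) y = (F^^(i+j)) x" unfolding x(3) funpow_add by simp
        ultimately show "(F^^i) y \<in> shiftZ X tau (Xs!(j+i))" by simp
      qed
      moreover have "y \<in> topspace X" using Fpow_in[OF x(1), of j] x(3) by simp
      ultimately show "y \<in> ?R" by blast
    qed
  next
    show "?R \<subseteq> ?L"
    proof
      fix y assume y: "y \<in> ?R"
      then have yR: "\<forall>i<r+1. (F^^i) y \<in> shiftZ X tau (Xs!(j+i))" by blast
      have "(F^^0) y \<in> shiftZ X tau (Xs!(j+0))" using spec[OF yR, of 0] by simp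
      then have "y \<in> shiftZ X tau (Xs!j)" by simp
      then have "\<exists>m. \<exists>a\<in>Xs!j. y = tpow X tau m a" by (simp only: mem_shiftZ)
      then obtain m z where z: "z \<in> Xs!j" "y = tpow X tau m z" by (elim exE bexE)
      have "z \<in> angle X h tau F (take (j+1) Xs)" using full z by simp
      then obtain x where x: "x \<in> topspace X" "\<forall>i<length (take (j+1) Xs). (F^^i) x \<in> shiftZ X tau (take (j+1) Xs ! i)"
         "z = (F^^j) x"
        unfolding angle_def using len by auto
      have xs: "\<forall>i<j+1. (F^^i) x \<in> shiftZ X tau (Xs ! i)" using x(2) len by auto
      define x' where "x' = tpow X tau m x"
      have x'T: "x' \<in> topspace X" using x'_def tpow_in[OF hom] x(1) by simp
      have yx': "y = (F^^j) x'" using x'_def z x Fpow_tpow by simp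
      have "\<forall>i<j+r+1. (F^^i) x' \<in> shiftZ X tau (Xs!i)"
      proof (intro allI impI)
        fix i assume i: "i < j+r+1"
        show "(F^^i) x' \<in> shiftZ X tau (Xs!i)"
        proof (cases "i \<le> j")
          case True
          then have "(F^^i) x' = tpow X tau m ((F^^i) x)" using x'_def Fpow_tpow x(1) by simp
          moreover have "i < length Xs" "i < j+1" using True len by auto
          moreover have "(F^^i) x \<in> shiftZ X tau (Xs!i)" using xs \<open>i < j+1\<close> by blast
          ultimately show ?thesis using shiftZ_tpow[OF subi[OF \<open>i < length Xs\<close>]] by simp
        next
          case False
          define d where "d = i - j"
          have d: "i = j + d" "d < r+1" using False i d_def by auto
          then have "(F^^i) x' = (F^^d) y" using yx' by (simp add: funpow_add add.commute)
          then show ?thesis using y d by auto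
        qed
      qed
      then show "y \<in> ?L" using x'T yx' by blast
    qed
  qed
  have e1: "angle X h tau F (take (j+r+1) Xs) = (F^^r) ` ((F^^j) ` {x\<in>topspace X. \<forall>i<j+r+1. (F^^i) x \<in> shiftZ X tau (Xs!i)}) \<inter> Xset X h F"
  proof -
    have a: "length (take (j+r+1) Xs) - 1 = r + j" using len by simp
    have b: "\<And>S. (F^^(r+j)) ` S = (F^^r) ` ((F^^j) ` S)" by (simp only: funpow_add image_comp)
    have c: "{x\<in>topspace X. \<forall>i<length (take (j+r+1) Xs). (F^^i) x \<in> shiftZ X tau (take (j+r+1) Xs ! i)}
       = {x\<in>topspace X. \<forall>i<j+r+1. (F^^i) x \<in> shiftZ X tau (Xs!i)}" using len by auto
    show ?thesis unfolding angle_def a b c ..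
  qed
  have e2: "angle X h tau F (drop j (take (j+r+1) Xs)) = (F^^r) ` {y\<in>topspace X. \<forall>i<r+1. (F^^i) y \<in> shiftZ X tau (Xs!(j+i))} \<inter> Xset X h F"
  proof -
    have a: "length (drop j (take (j+r+1) Xs)) - 1 = r" using len by simp
    have c: "{x\<in>topspace X. \<forall>i<length (drop j (take (j+r+1) Xs)). (F^^i) x \<in> shiftZ X tau (drop j (take (j+r+1) Xs) ! i)}
       = {y\<in>topspace X. \<forall>i<r+1. (F^^i) y \<in> shiftZ X tau (Xs!(j+i))}" using len by auto
    show ?thesis unfolding angle_def a c ..
  qed
  show ?thesis using e1 e2 1 by simp
qed


lemma angle_full_eq:
  assumes subX: "\<forall>A\<in>set Xs. A \<subseteq> topspace X" and subY: "\<forall>A\<in>set Ys. A \<subseteq> topspace X"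
    and lx: "j + r < length Xs" and ly: "j' + r < length Ys"
    and fx: "angle X h tau F (take (j+1) Xs) = Xs!j"
    and fy: "angle X h tau F (take (j'+1) Ys) = Ys!j'"
    and el: "\<forall>i\<le>r. Xs!(j+i) = Ys!(j'+i)"
  shows "angle X h tau F (take (j+r+1) Xs) = angle X h tau F (take (j'+r+1) Ys)"
proof -
  have "drop j (take (j+r+1) Xs) = drop j' (take (j'+r+1) Ys)"
  proof (rule nth_equalityI)
    show "length (drop j (take (j+r+1) Xs)) = length (drop j' (take (j'+r+1) Ys))" using lx ly by simp
    fix i assume "i < length (drop j (take (j+r+1) Xs))"
    then have i: "i \<le> r" using lx by simp
    have a: "drop j (take (j+r+1) Xs) ! i = Xs!(j+i)" using lx i by simp
    have b: "drop j' (take (j'+r+1) Ys) ! i = Ys!(j'+i)" using ly i by simp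
    show "drop j (take (j+r+1) Xs) ! i = drop j' (take (j'+r+1) Ys) ! i"
      unfolding a b using el i by blast
  qed
  then show ?thesis unfolding angle_comp[OF subX lx fx] angle_comp[OF subY ly fy] by (rule arg_cong)
qed

lemma seq_equiv_trans:
  assumes subX: "\<forall>A\<in>set Xs. A \<subseteq> topspace X" and subY: "\<forall>A\<in>set Ys. A \<subseteq> topspace X"
    and subZ: "\<forall>A\<in>set Zs. A \<subseteq> topspace X"
    and e1: "seq_equiv X h tau F Xs Ys" and e2: "seq_equiv X h tau F Ys Zs"
  shows "seq_equiv X h tau F Xs Zs"
proof -
  define n where "n = length Xs - 1"
  define m where "m = length Ys - 1"
  define p where "p = length Zs - 1"
  have ne: "Xs \<noteq> []" "Ys \<noteq> []" "Zs \<noteq> []" using seq_equiv_ne[OF e1] seq_equiv_ne[OF e2] by auto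
  then have lens: "length Xs = n+1" "length Ys = m+1" "length Zs = p+1" using n_def m_def p_def by auto
  obtain k where k: "k \<le> min n m" "\<forall>i\<le>k. Xs!(n-i) = Ys!(m-i)"
     "angle X h tau F (take (n-k+1) Xs) = Xs!(n-k)" "Xs!(n-k) = Ys!(m-k)"
     "angle X h tau F (take (m-k+1) Ys) = Ys!(m-k)"
    using e1 unfolding seq_equiv_def Let_def n_def m_def by blast
  obtain k' where k': "k' \<le> min m p" "\<forall>i\<le>k'. Ys!(m-i) = Zs!(p-i)"
     "angle X h tau F (take (m-k'+1) Ys) = Ys!(m-k')" "Ys!(m-k') = Zs!(p-k')"
     "angle X h tau F (take (p-k'+1) Zs) = Zs!(p-k')"
    using e2 unfolding seq_equiv_def Let_def m_def p_def by blast
  show ?thesis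
  proof (cases "k \<le> k'")
    case True
    have el: "\<forall>i\<le>k'-k. Zs!(p-k'+i) = Ys!(m-k'+i)"
    proof (intro allI impI)
      fix i assume i: "i \<le> k'-k"
      have "k'-i \<le> k'" by simp
      then have "Ys!(m-(k'-i)) = Zs!(p-(k'-i))" using k'(2) by blast
      moreover have "p-(k'-i) = p-k'+i" "m-(k'-i) = m-k'+i" using k' i by auto
      ultimately show "Zs!(p-k'+i) = Ys!(m-k'+i)" by metis
    qed
    have "angle X h tau F (take (p-k'+(k'-k)+1) Zs) = angle X h tau F (take (m-k'+(k'-k)+1) Ys)"
      by (rule angle_full_eq[OF subZ subY _ _ k'(5) k'(3) el]) (use lens k(1) k'(1) True in auto)
    moreover have "p-k'+(k'-k) = p-k" "m-k'+(k'-k) = m-k" using k(1) k'(1) True by auto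
    moreover have "Ys!(m-k) = Zs!(p-k)" using k'(2) True by blast
    ultimately have zf: "angle X h tau F (take (p-k+1) Zs) = Zs!(p-k)"
      using k(5) by simp
    have tl: "\<forall>i\<le>k. Xs!(n-i) = Zs!(p-i)"
    proof (intro allI impI)
      fix i assume "i \<le> k"
      then show "Xs!(n-i) = Zs!(p-i)" using k(2) k'(2) True by (metis order_trans)
    qed
    have kb: "k \<le> min n p" using k(1) k'(1) True by simp
    have xz: "Xs!(n-k) = Zs!(p-k)" using tl by blast
    have ex: "\<exists>kk\<le>min n p. (\<forall>i\<le>kk. Xs!(n-i) = Zs!(p-i)) \<and>
        angle X h tau F (take (n-kk+1) Xs) = Xs!(n-kk) \<and> Xs!(n-kk) = Zs!(p-kk) \<and>
        angle X h tau F (take (p-kk+1) Zs) = Zs!(p-kk)"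
      by (rule exI[of _ k], intro conjI kb tl k(3) xz zf)
    show ?thesis unfolding seq_equiv_def Let_def n_def[symmetric] p_def[symmetric]
      by (intro conjI ne(1) ne(3) ex)
  next
    case False
    have el: "\<forall>i\<le>k-k'. Xs!(n-k+i) = Ys!(m-k+i)"
    proof (intro allI impI)
      fix i assume i: "i \<le> k-k'"
      have "k-i \<le> k" by simp
      then have "Xs!(n-(k-i)) = Ys!(m-(k-i))" using k(2) by blast
      moreover have "n-(k-i) = n-k+i" "m-(k-i) = m-k+i" using k i by auto
      ultimately show "Xs!(n-k+i) = Ys!(m-k+i)" by metis
    qed
    have "angle X h tau F (take (n-k+(k-k')+1) Xs) = angle X h tau F (take (m-k+(k-k')+1) Ys)"
      by (rule angle_full_eq[OF subX subY _ _ k(3) k(5) el]) (use lens k(1) k'(1) False in auto)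
    moreover have "n-k+(k-k') = n-k'" "m-k+(k-k') = m-k'" using k(1) k'(1) False by auto
    moreover have "Xs!(n-k') = Ys!(m-k')" using k(2) False by simp
    ultimately have xf: "angle X h tau F (take (n-k'+1) Xs) = Xs!(n-k')"
      using k'(3) by simp
    have tl: "\<forall>i\<le>k'. Xs!(n-i) = Zs!(p-i)"
    proof (intro allI impI)
      fix i assume "i \<le> k'"
      then show "Xs!(n-i) = Zs!(p-i)" using k(2) k'(2) False by (metis order_trans nat_le_linear)
    qed
    have kb: "k' \<le> min n p" using k(1) k'(1) False by simp
    have xz: "Xs!(n-k') = Zs!(p-k')" using tl by blast
    have ex: "\<exists>kk\<le>min n p. (\<forall>i\<le>kk. Xs!(n-i) = Zs!(p-i)) \<and>
        angle X h tau F (take (n-kk+1) Xs) = Xs!(n-kk) \<and> Xs!(n-kk) = Zs!(p-kk) \<and>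
        angle X h tau F (take (p-kk+1) Zs) = Zs!(p-kk)"
      by (rule exI[of _ k'], intro conjI kb tl xf xz k'(5))
    show ?thesis unfolding seq_equiv_def Let_def n_def[symmetric] p_def[symmetric]
      by (intro conjI ne(1) ne(3) ex)
  qed
qed

end

context
  fixes X :: "'a topology" and h :: "real \<Rightarrow> 'a" and tau :: "'a \<Rightarrow> 'a"
  assumes lg: "lifted_graph X h tau"
begin

lemma lg_hom: "homeomorphic_map X X tau"
  using lg unfolding lifted_graph_def by (elim conjE)

lemma lg_emb: "embedding_map euclideanreal X h"
  using lg unfolding lifted_graph_def by (elim conjE)

lemma lg_shift: "tau (h x) = h (x + 1)"
  using lg unfolding lifted_graph_def by (elim conjE) (rule spec)

lemma lg_comp: "C \<in> connected_components_of (subtopology X (topspace X - range h)) \<Longrightarrow>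
    \<exists>!y. y \<in> X closure_of C \<inter> range h"
proof -
  assume C: "C \<in> connected_components_of (subtopology X (topspace X - range h))"
  have "\<forall>C\<in>connected_components_of (subtopology X (topspace X - range h)).
        finite_top_graph (subtopology X (X closure_of C)) \<and> (\<exists>!y. y \<in> X closure_of C \<inter> range h)"
    using lg unfolding lifted_graph_def by (elim conjE) assumption
  then have "finite_top_graph (subtopology X (X closure_of C)) \<and> (\<exists>!y. y \<in> X closure_of C \<inter> range h)"
    using C by (rule bspec)
  then show "\<exists>!y. y \<in> X closure_of C \<inter> range h" by (rule conjunct2)
qed

lemma h_inj: "inj h"
proof -
  have "homeomorphic_map euclideanreal (subtopology X (h ` topspace euclideanreal)) h"
    using lg_emb unfolding embedding_map_def .
  then have "inj_on h (topspace euclideanreal)" by (rule homeomorphic_imp_injective_map)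
  then show ?thesis by simp
qed

lemma h_in: "h x \<in> topspace X"
proof -
  have "homeomorphic_map euclideanreal (subtopology X (h ` topspace euclideanreal)) h"
    using lg_emb unfolding embedding_map_def .
  then have "h ` topspace euclideanreal = topspace (subtopology X (h ` topspace euclideanreal))"
    by (rule homeomorphic_imp_surjective_map)
  then have eq: "h ` UNIV = topspace X \<inter> range h" by (simp only: topspace_subtopology topspace_euclidean)
  have "h x \<in> topspace X \<inter> range h" by (rule subst[OF eq, of "\<lambda>S. h x \<in> S"]) (rule rangeI)
  then show ?thesis by (rule IntD1)
qed

lemma att_unique:
  assumes C: "C \<in> connected_components_of (subtopology X (topspace X - range h))"
  shows "\<exists>!t. h t \<in> X closure_of C"
proof -
  obtain y where y: "y \<in> X closure_of C \<inter> range h" and u: "\<forall>z. z \<in> X closure_of C \<inter> range h \<longrightarrow> z = y"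
    using lg_comp[OF C] by (rule ex1E)
  have "y \<in> range h" using y by (rule IntD2)
  then obtain t where t: "y = h t" by (rule rangeE)
  show ?thesis
  proof (rule ex1I[of _ t])
    show "h t \<in> X closure_of C" using y t by simp
    fix s assume "h s \<in> X closure_of C"
    then have "h s \<in> X closure_of C \<inter> range h" by (rule IntI[OF _ rangeI])
    then have "h s = y" using u by (rule_tac mp[OF spec[OF u]])
    then show "s = t" using t h_inj by (simp add: inj_eq)
  qed
qed

abbreviation "Y \<equiv> subtopology X (topspace X - range h)"

lemma rR_range: "rR X h (h s) = s"
  unfolding rR_def using h_inj by (simp add: inv_f_f)

lemma rR_off:
  assumes y: "y \<in> topspace X" "y \<notin> range h"
  shows "h (rR X h y) \<in> X closure_of connected_component_of_set Y y"
    and "\<And>t. h t \<in> X closure_of connected_component_of_set Y y \<Longrightarrow> rR X h y = t"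
proof -
  have C: "connected_component_of_set Y y \<in> connected_components_of Y"
    using y by (simp add: connected_component_in_connected_components_of)
  have r: "rR X h y = (THE t. h t \<in> X closure_of connected_component_of_set Y y)"
    unfolding rR_def using y(2) by simp
  show "h (rR X h y) \<in> X closure_of connected_component_of_set Y y"
    unfolding r by (rule theI'[OF att_unique[OF C]])
  fix t assume "h t \<in> X closure_of connected_component_of_set Y y"
  then show "rR X h y = t" unfolding r using att_unique[OF C] by (rule the1_equality[rotated])
qed

lemma range_sub_TR: "range h \<subseteq> TR X h F"
proof
  fix z assume "z \<in> range h"
  then obtain s where s: "z = h s" by blast
  have "z \<in> (F ^^ 0) ` range h" using s by simp
  then have z1: "z \<in> (\<Union>n. (F ^^ n) ` range h)" by (rule UN_I[OF UNIV_I])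
  have z2: "z \<in> topspace X" using s h_in by simp
  have "z \<in> topspace X \<inter> (\<Union>n. (F ^^ n) ` range h)" using z1 z2 by (rule IntI[rotated])
  then show "z \<in> TR X h F" unfolding TR_def by (rule subsetD[OF closure_of_subset_Int])
qed

lemma closure_comp_rR:
  assumes C: "C \<in> connected_components_of (subtopology X (Sset X h F))"
    and c: "c \<in> C" and y: "y \<in> X closure_of C"
  shows "rR X h y = rR X h c"
proof -
  have SS: "Sset X h F \<subseteq> topspace X - range h"
  proof
    fix z assume "z \<in> Sset X h F"
    then have z: "z \<in> topspace X" "z \<notin> TR X h F" unfolding Sset_def by simp_all
    have "z \<notin> range h"
    proof
      assume "z \<in> range h"
      then have "z \<in> TR X h F" by (rule subsetD[OF range_sub_TR])
      then show False using z(2) by simp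
    qed
    then show "z \<in> topspace X - range h" using z(1) by simp
  qed
  have CS: "C \<subseteq> Sset X h F" using connected_components_of_subset[OF C] by simp
  have "c \<in> topspace X - range h" by (rule subsetD[OF SS subsetD[OF CS c]])
  then have cY: "c \<in> topspace X" "c \<notin> range h" by simp_all
  have "connectedin (subtopology X (Sset X h F)) C" by (rule connectedin_connected_components_of[OF C])
  then have "connectedin X C" by (simp add: connectedin_subtopology)
  then have "connectedin Y C" using CS SS by (simp add: connectedin_subtopology)
  then have CD: "C \<subseteq> connected_component_of_set Y c" using c by (rule connected_component_of_maximal)
  define D where "D = connected_component_of_set Y c"
  have yD: "y \<in> X closure_of D" using closure_of_mono[OF CD] y D_def by auto
  have hD: "h (rR X h c) \<in> X closure_of D" using rR_off(1)[OF cY] D_def by simp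
  show ?thesis
  proof (cases "y \<in> range h")
    case True
    then obtain s where s: "y = h s" by blast
    have "rR X h c = s" using rR_off(2)[OF cY] yD s D_def by simp
    then show ?thesis using s rR_range by simp
  next
    case False
    have yT: "y \<in> topspace X" using y by (simp add: in_closure_of)
    have "closedin Y D" unfolding D_def by (rule closedin_connected_component_of)
    then have "Y closure_of D = D" by (rule closure_of_closedin)
    moreover have "D \<subseteq> topspace X - range h"
      unfolding D_def using connected_component_of_subset_topspace[of Y c] by simp
    ultimately have "D = (topspace X - range h) \<inter> X closure_of D"
      using closure_of_subtopology[of X "topspace X - range h" D] by (simp add: Int_absorb1)
    then have "y \<in> D" using yD yT False by blast
    then have "connected_component_of Y c y" unfolding D_def by simp
    then have "connected_component_of_set Y y = D"
      unfolding D_def using connected_component_of_equiv by metis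
    then show ?thesis using rR_off(2)[OF yT False] hD by simp
  qed
qed

lemma tau_off:
  assumes "y \<in> topspace X" "y \<notin> range h" shows "tau y \<notin> range h"
proof
  assume "tau y \<in> range h"
  then obtain t where t: "tau y = h t" by blast
  have "tau (h (t-1)) = h t" using lg_shift[of "t-1"] by simp
  moreover have "h (t-1) \<in> topspace X" by (rule h_in)
  ultimately have eq: "tau y = tau (h (t-1))" using t by simp
  have inj: "inj_on tau (topspace X)" using bij_tau[OF lg_hom] unfolding bij_betw_def by (rule conjunct1)
  have "y = h (t-1)" by (rule inj_onD[OF inj eq assms(1) h_in])
  then show False using assms(2) by simp
qed

lemma tau_image_Y: "tau ` (topspace X \<inter> (topspace X - range h)) = topspace X \<inter> (topspace X - range h)"
proof
  show "tau ` (topspace X \<inter> (topspace X - range h)) \<subseteq> topspace X \<inter> (topspace X - range h)"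
  proof
    fix z assume "z \<in> tau ` (topspace X \<inter> (topspace X - range h))"
    then obtain w where w0: "w \<in> topspace X \<inter> (topspace X - range h)" and w3: "z = tau w" by (rule imageE)
    have w: "w \<in> topspace X" "w \<notin> range h" "z = tau w" using w0 w3 by simp_all
    show "z \<in> topspace X \<inter> (topspace X - range h)" using tau_off[OF w(1,2)] tau_in[OF lg_hom w(1)] w(3) by simp
  qed
  show "topspace X \<inter> (topspace X - range h) \<subseteq> tau ` (topspace X \<inter> (topspace X - range h))"
  proof
    fix z assume z: "z \<in> topspace X \<inter> (topspace X - range h)"
    define w where "w = inv_into (topspace X) tau z"
    have w: "w \<in> topspace X" "tau w = z" using z itau_in[OF lg_hom] tau_itau[OF lg_hom] w_def by auto
    have "w \<notin> range h"
    proof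
      assume "w \<in> range h"
      then obtain s where "w = h s" by blast
      then have "z = h (s+1)" using w(2) lg_shift by simp
      then show False using z by blast
    qed
    then show "z \<in> tau ` (topspace X \<inter> (topspace X - range h))" using w by blast
  qed
qed

lemma rR_tau: assumes y: "y \<in> topspace X" shows "rR X h (tau y) = rR X h y + 1"
proof (cases "y \<in> range h")
  case True
  then obtain s where s: "y = h s" by blast
  then show ?thesis using lg_shift rR_range by simp
next
  case False
  have homY: "homeomorphic_map Y Y tau"
    by (rule homeomorphic_map_subtopologies[OF lg_hom tau_image_Y])
  have yY: "y \<in> topspace Y" using y False by simp
  define D where "D = connected_component_of_set Y y"
  have e1: "connected_component_of_set Y (tau y) = tau ` D"
    unfolding D_def by (rule homeomorphic_map_connected_component_of[OF homY yY])
  have DT: "D \<subseteq> topspace X" unfolding D_def using connected_component_of_subset_topspace[of Y y] by auto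
  have e2: "X closure_of (tau ` D) = tau ` (X closure_of D)"
    by (rule homeomorphic_map_closure_of[OF lg_hom DT])
  have "h (rR X h y) \<in> X closure_of D" using rR_off(1)[OF y False] D_def by simp
  then have "tau (h (rR X h y)) \<in> X closure_of connected_component_of_set Y (tau y)"
    using e1 e2 by simp
  then have "h (rR X h y + 1) \<in> X closure_of connected_component_of_set Y (tau y)"
    using lg_shift by simp
  then show ?thesis using rR_off(2)[OF tau_in[OF lg_hom y] tau_off[OF y False]] by simp
qed

lemma rR_itau: assumes y: "y \<in> topspace X"
  shows "rR X h (inv_into (topspace X) tau y) = rR X h y - 1"
proof -
  have "rR X h (tau (inv_into (topspace X) tau y)) = rR X h (inv_into (topspace X) tau y) + 1"
    by (rule rR_tau[OF itau_in[OF lg_hom y]])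
  then show ?thesis using tau_itau[OF lg_hom y] by simp
qed

lemma rR_tpow: assumes y: "y \<in> topspace X" shows "rR X h (tpow X tau m y) = rR X h y + of_int m"
proof (induction m rule: int_induct[where k=0])
  case base then show ?case by (simp add: tpow_def)
next
  case (step1 i)
  then show ?case using tpow_succ[OF lg_hom y, of i] rR_tau[OF tpow_in[OF lg_hom y, of i]] by simp
next
  case (step2 i)
  then show ?case using tpow_pred[OF lg_hom y, of i] rR_itau[OF tpow_in[OF lg_hom y, of i]] by simp
qed

lemma branch_sub_Xset:
  assumes B: "B \<in> branches X h F" shows "B \<subseteq> Xset X h F" "B \<subseteq> topspace X"
proof -
  obtain C where C: "C \<in> connected_components_of (subtopology X (Sset X h F))" and BC: "B = X closure_of C"
    using B unfolding branches_def by blast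
  obtain c where c: "c \<in> C" using nonempty_connected_components_of[OF C] by blast
  have CS: "C \<subseteq> Sset X h F" using connected_components_of_subset[OF C] by simp
  have cU: "0 \<le> rR X h c \<and> rR X h c < 1" using c CS unfolding Sset_def unitfib_def by blast
  have C2: "C \<subseteq> topspace X - TR X h F" using CS unfolding Sset_def by blast
  show "B \<subseteq> Xset X h F"
  proof
    fix y assume y: "y \<in> B"
    have yT: "y \<in> topspace X" using y BC by (simp add: in_closure_of)
    have "rR X h y = rR X h c" using closure_comp_rR[OF C c] y BC by simp
    then have "y \<in> unitfib X h" unfolding unitfib_def using yT cU by simp
    moreover have "y \<in> X closure_of (topspace X - TR X h F)" using closure_of_mono[OF C2] y BC by blast
    ultimately show "y \<in> Xset X h F" unfolding Xset_def by blast
  qed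
  show "B \<subseteq> topspace X" using BC closure_of_subset_topspace by simp
qed

lemma angle_single:
  assumes AB: "A \<subseteq> B" and B: "B \<in> branches X h F"
  shows "angle X h tau F [A] = A"
proof -
  have AX: "A \<subseteq> Xset X h F" and AT: "A \<subseteq> topspace X" using branch_sub_Xset[OF B] AB by auto
  have "angle X h tau F [A] = {x\<in>topspace X. x \<in> shiftZ X tau A} \<inter> Xset X h F"
    unfolding angle_def by simp
  also have "\<dots> = A"
  proof
    show "A \<subseteq> {x\<in>topspace X. x \<in> shiftZ X tau A} \<inter> Xset X h F"
    proof
      fix a assume a: "a \<in> A"
      have "a = tpow X tau 0 a" by (simp add: tpow_def)
      then have "a \<in> shiftZ X tau A" unfolding mem_shiftZ using a by blast
      then show "a \<in> {x\<in>topspace X. x \<in> shiftZ X tau A} \<inter> Xset X h F" using a AX AT by blast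
    qed
    show "{x\<in>topspace X. x \<in> shiftZ X tau A} \<inter> Xset X h F \<subseteq> A"
    proof
      fix x assume x: "x \<in> {x\<in>topspace X. x \<in> shiftZ X tau A} \<inter> Xset X h F"
      then have "\<exists>m. \<exists>a\<in>A. x = tpow X tau m a" unfolding mem_shiftZ by blast
      then obtain m a where a: "a \<in> A" "x = tpow X tau m a" by (elim exE bexE)
      have aT: "a \<in> topspace X" using a AT by blast
      have ra: "0 \<le> rR X h a \<and> rR X h a < 1" using a AX unfolding Xset_def unitfib_def by blast
      have rx: "0 \<le> rR X h x \<and> rR X h x < 1" using x unfolding Xset_def unitfib_def by blast
      have "rR X h x = rR X h a + of_int m" using rR_tpow[OF aT] a by simp
      then have "m = 0" using ra rx by linarith
      then show "x \<in> A" using a by (simp add: tpow_def)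
    qed
  qed
  finally show ?thesis .
qed

end


lemma P_branch:
  assumes "basic_partition X h tau F P" "A \<in> P"
  shows "\<exists>B\<in>branches X h F. A \<subseteq> B"
proof -
  obtain l p where lp: "\<forall>A\<in>P. (\<exists>B\<in>branches X h F. A \<subseteq> B \<and> cinterval X h F B A \<and>
             F (imin X h F B A) = tpow X tau (p A) (bmin X h F (l A))) \<and>
        l A \<in> branches X h F \<and>
        F ` A \<subseteq> tpow X tau (p A) ` (l A) \<union> X interior_of (TR X h F)"
    using assms(1) unfolding basic_partition_def by (elim conjE exE) assumption
  then have "(\<exists>B\<in>branches X h F. A \<subseteq> B \<and> cinterval X h F B A \<and>
             F (imin X h F B A) = tpow X tau (p A) (bmin X h F (l A)))"
    using assms(2) by blast
  then show ?thesis by blast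
qed

lemma seq_equiv_refl:
  assumes lg: "lifted_graph X h tau" and bp: "basic_partition X h tau F P"
    and Xs: "Xs \<in> lists P" "Xs \<noteq> []"
  shows "seq_equiv X h tau F Xs Xs"
proof -
  define n where "n = length Xs - 1"
  have x0: "Xs!0 \<in> P" using Xs by (simp add: in_lists_conv_set)
  obtain Bb where Bb: "Bb \<in> branches X h F" "Xs!0 \<subseteq> Bb" using P_branch[OF bp x0] by blast
  have a: "angle X h tau F [Xs!0] = Xs!0" by (rule angle_single[OF lg Bb(2) Bb(1)])
  have t: "take (n-n+1) Xs = [Xs!0]" using Xs(2) by (cases Xs) auto
  have ex: "\<exists>kk\<le>min n n. (\<forall>i\<le>kk. Xs!(n-i) = Xs!(n-i)) \<and>
        angle X h tau F (take (n-kk+1) Xs) = Xs!(n-kk) \<and> Xs!(n-kk) = Xs!(n-kk) \<and>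
        angle X h tau F (take (n-kk+1) Xs) = Xs!(n-kk)"
    apply (rule exI[of _ n])
    apply (simp only: t)
    using a by simp
  show ?thesis unfolding seq_equiv_def Let_def n_def[symmetric]
    by (intro conjI Xs(2) ex)
qed

theorem mainTheorem12:
  fixes X :: "'a topology" and h :: "real \<Rightarrow> 'a" and tau F :: "'a \<Rightarrow> 'a"
    and P :: "'a set set" and As :: "'a set list" and \<alpha> \<beta> :: "'a set list set"
  assumes "lifted_graph X h tau"
    and "continuous_map X X F"
    and "degree_one X tau F"
    and "sun_like X h F"
    and "basic_partition X h tau F P"
    and "\<alpha> \<in> cg_vertices X h tau F P"
    and "As \<in> lists P" and "As \<noteq> []" and "\<alpha> = cls X h tau F P As"
    and "cg_arrow X h tau F P \<alpha> \<beta>"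
  shows "\<exists>A\<in>P. \<beta> = cls X h tau F P (As @ [A])"
proof -
  note lg = assms(1) and cont = assms(2) and deg = assms(3) and bp = assms(5)
  have hom: "homeomorphic_map X X tau" by (rule lg_hom[OF lg])
  have "\<exists>Bs\<in>lists P. Bs \<noteq> [] \<and> (\<exists>B\<in>P. \<alpha> = cls X h tau F P Bs \<and> \<beta> = cls X h tau F P (Bs @ [B]))"
    using assms(10) unfolding cg_arrow_def by (elim conjE)
  then obtain Bs B where Bs: "Bs \<in> lists P" "Bs \<noteq> []" and B: "B \<in> P"
    and ab: "\<alpha> = cls X h tau F P Bs" "\<beta> = cls X h tau F P (Bs @ [B])"
    by (elim bexE conjE)
  have subT: "\<And>Xs. Xs \<in> lists P \<Longrightarrow> \<forall>A\<in>set Xs. A \<subseteq> topspace X"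
  proof
    fix Xs A assume "Xs \<in> lists P" "A \<in> set Xs"
    then have "A \<in> P" by (simp add: in_lists_conv_set)
    then obtain Bb where Bb: "Bb \<in> branches X h F" "A \<subseteq> Bb" using P_branch[OF bp] by blast
    have "Bb \<subseteq> topspace X" by (rule branch_sub_Xset(2)[OF lg Bb(1)])
    then show "A \<subseteq> topspace X" using Bb(2) by (rule subset_trans[rotated])
  qed
  have "As \<in> cls X h tau F P As"
    unfolding cls_def using assms(7) seq_equiv_refl[OF lg bp assms(7,8)] by simp
  then have "As \<in> cls X h tau F P Bs" using assms(9) ab(1) by simp
  then have e0: "seq_equiv X h tau F Bs As" unfolding cls_def by simp
  have e1: "seq_equiv X h tau F (As @ [B]) (Bs @ [B])"
    by (rule seq_equiv_snoc[OF seq_equiv_sym[OF e0]])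
  have AB: "As @ [B] \<in> lists P" "Bs @ [B] \<in> lists P" using assms(7) Bs(1) B by simp_all
  have "cls X h tau F P (As @ [B]) = cls X h tau F P (Bs @ [B])"
  proof
    show "cls X h tau F P (As @ [B]) \<subseteq> cls X h tau F P (Bs @ [B])"
    proof
      fix Cs assume "Cs \<in> cls X h tau F P (As @ [B])"
      then have Cs: "Cs \<in> lists P" "seq_equiv X h tau F (As @ [B]) Cs" unfolding cls_def by simp_all
      have "seq_equiv X h tau F (Bs @ [B]) Cs"
        by (rule seq_equiv_trans[OF hom cont deg subT[OF AB(2)] subT[OF AB(1)] subT[OF Cs(1)]
              seq_equiv_sym[OF e1] Cs(2)])
      then show "Cs \<in> cls X h tau F P (Bs @ [B])" unfolding cls_def using Cs(1) by simp
    qed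
    show "cls X h tau F P (Bs @ [B]) \<subseteq> cls X h tau F P (As @ [B])"
    proof
      fix Cs assume "Cs \<in> cls X h tau F P (Bs @ [B])"
      then have Cs: "Cs \<in> lists P" "seq_equiv X h tau F (Bs @ [B]) Cs" unfolding cls_def by simp_all
      have "seq_equiv X h tau F (As @ [B]) Cs"
        by (rule seq_equiv_trans[OF hom cont deg subT[OF AB(1)] subT[OF AB(2)] subT[OF Cs(1)]
              e1 Cs(2)])
      then show "Cs \<in> cls X h tau F P (As @ [B])" unfolding cls_def using Cs(1) by simp
    qed
  qed
  then show ?thesis using ab(2) B by blast
qed

end
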